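(* Let $u$ be the field with $u(x+\tfrac12,t+\tfrac12)=(-1)^{(x-1)(t-1)}$ for all $(x,t)\in\mathbb{Z}^2$. For each $(x,t)\in\mathbb{Z}^2$ with $t\ge 1$ and either $(x,t)\equiv(2,1)\pmod 4$ or $(x,t)\equiv(0,3)\pmod 4$ (componentwise), the following hold: 1. $\sqrt2\, a_1(x+1,t,u)=a_1(x,t-1,u)=\sqrt2\, a_1(x-1,t,u)=a_1(x,t+1,u)=\sqrt2\, a_2(x+1,t,u)=\sqrt2\, a_2(x-1,t,u)-2a_2(x,t+1,u)$; 2. $a_2(x,t-1,u)=0$.
   Context: A checker path is a finite sequence of integer points $s_0,s_1,\dots,s_t$ in the plane such that each vector $s_{k+1}-s_k$ equals $(1,1)$ or $(-1,1)$. A turn is a point $s_k$ with $0<k<t$ such that the vectors $s_{k+1}-s_k$ and $s_{k-1}-s_k$ are orthogonal; $\mathrm{turns}(s)$ is the number of turns. An edge is a segment joining two diagonally adjacent integer points (differing by $(\pm1,1)$) whose coordinate sums are even; every step $s_ks_{k+1}$ of a checker path starting at $(0,0)$ is an edge. A field is a map $u$ from edges to $\{-1,1\}$; for half-integers $x,t$ (i.e. $x-\tfrac12,t-\tfrac12\in\mathbb{Z}$), $u(x,t)$ denotes the value of $u$ on the edge with midpoint $(x,t)$. For integers $x$ and $t\ge 0$ define $$a(x,t,u):=2^{(1-t)/2}\, i\sum_s(-i)^{\mathrm{turns}(s)}u(s_0s_1)u(s_1s_2)\cdots u(s_{t-1}s_t),$$ the sum over all checker paths $s=(s_0,\dots,s_t)$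 with $s_0=(0,0)$, $s_1=(1,1)$, $s_t=(x,t)$ (an empty sum is $0$; in particular $a(x,0,u)=0$). Let $a_1(x,t,u)$ and $a_2(x,t,u)$ be the real and imaginary parts of $a(x,t,u)$. *)

theory Defs
  imports Complex_Main
begin

type_synonym point = "int \<times> int"
type_synonym edge = "point \<times> point"
(* a field: value on each edge (only values on edges matter); should be in {-1,1} *)
type_synonym field = "edge \<Rightarrow> int"

definition is_field :: "field \<Rightarrow> bool" where
  "is_field u \<longleftrightarrow> (\<forall>e. u e \<in> {-1, 1})"

definition vsub :: "point \<Rightarrow> point \<Rightarrow> point" where
  "vsub p q = (fst p - fst q, snd p - snd q)"

definition checker_path :: "point list \<Rightarrow> bool" where
  "checker_path s \<longleftrightarrow> s \<noteq> [] \<and>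
     (\<forall>k. k + 1 < length s \<longrightarrow> vsub (s ! (k+1)) (s ! k) \<in> {(1,1), (-1,1)})"

definition dotp :: "point \<Rightarrow> point \<Rightarrow> int" where
  "dotp p q = fst p * fst q + snd p * snd q"

definition turns :: "point list \<Rightarrow> nat" where
  "turns s = card {k. 0 < k \<and> k + 1 < length s \<and>
       dotp (vsub (s ! (k+1)) (s ! k)) (vsub (s ! (k-1)) (s ! k)) = 0}"

definition paths :: "int \<Rightarrow> int \<Rightarrow> point list set" where
  "paths x t = {s. t \<ge> 1 \<and> length s = nat t + 1 \<and> checker_path s \<and>
      s ! 0 = (0,0) \<and> s ! 1 = (1,1) \<and> s ! nat t = (x,t)}"

definition amp :: "int \<Rightarrow> int \<Rightarrow> field \<Rightarrow> complex" where
  "amp x t u = complex_of_real (2 powr ((1 - real_of_int t) / 2)) * \<i> *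
     (\<Sum>s\<in>paths x t. (- \<i>) ^ turns s *
        (\<Prod>k<nat t. of_int (u (s ! k, s ! (k+1)))))"

definition a1 :: "int \<Rightarrow> int \<Rightarrow> field \<Rightarrow> real" where
  "a1 x t u = Re (amp x t u)"

definition a2 :: "int \<Rightarrow> int \<Rightarrow> field \<Rightarrow> real" where
  "a2 x t u = Im (amp x t u)"

(* value of the field on the edge e = (p,q): the midpoint of e is
   (min(p_x,q_x)+1/2, min(p_t,q_t)+1/2); the field of the theorem has
   u(x+1/2,t+1/2) = (-1)^((x-1)(t-1)) *)
definition u_thm :: field where
  "u_thm e = (let x = min (fst (fst e)) (fst (snd e));
                  t = min (snd (fst e)) (snd (snd e))
              in if even ((x - 1) * (t - 1)) then 1 else -1)"

end

theory Submission
  imports Defs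
begin

lemma checker_bound:
  assumes "checker_path s" "s ! 0 = (0,0)" "k < length s"
  shows "\<bar>fst (s ! k)\<bar> \<le> int k \<and> snd (s ! k) = int k"
  using assms(3)
proof (induction k)
  case 0 then show ?case using assms(2) by simp
next
  case (Suc k)
  have "vsub (s ! (k+1)) (s ! k) \<in> {(1,1), (-1,1)}"
    using assms(1) Suc.prems unfolding checker_path_def by auto
  then show ?case using Suc by (auto simp: vsub_def prod_eq_iff)
qed

lemma finite_paths: "finite (paths x t)"
proof -
  let ?N = "nat t"
  have "paths x t \<subseteq> {s. set s \<subseteq> {- int ?N..int ?N} \<times> {0..int ?N} \<and> length s = ?N + 1}"
  proof
    fix s assume s: "s \<in> paths x t"
    have "set s \<subseteq> {- int ?N..int ?N} \<times> {0..int ?N}"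
    proof
      fix p assume "p \<in> set s"
      then obtain k where k: "k < length s" "p = s ! k" by (auto simp: in_set_conv_nth)
      then have "\<bar>fst (s ! k)\<bar> \<le> int k \<and> snd (s ! k) = int k"
        using checker_bound[of s k] s unfolding paths_def by auto
      moreover have "k \<le> ?N" using k s unfolding paths_def by auto
      ultimately have "fst p \<in> {- int ?N..int ?N}" "snd p \<in> {0..int ?N}" using k by auto
      then show "p \<in> {- int ?N..int ?N} \<times> {0..int ?N}" by (simp add: mem_Times_iff)
    qed
    then show "s \<in> {s. set s \<subseteq> {- int ?N..int ?N} \<times> {0..int ?N} \<and> length s = ?N + 1}"
      using s unfolding paths_def by auto
  qed
  moreover have "finite {s. set s \<subseteq> {- int ?N..int ?N} \<times> {0..int ?N} \<and> length s = ?N + 1}"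
    by (rule finite_lists_length_eq) auto
  ultimately show ?thesis by (rule finite_subset)
qed

lemma turns_snoc:
  assumes "length s = n + 1" "n \<ge> 1"
  shows "turns (s @ [v]) = turns s +
     (if dotp (vsub v (s ! n)) (vsub (s ! (n-1)) (s ! n)) = 0 then 1 else 0)"
proof -
  let ?D = "\<lambda>s k. dotp (vsub (s ! (k+1)) (s ! k)) (vsub (s ! (k-1)) (s ! k)) = 0"
  have A: "{k. 0 < k \<and> k + 1 < length (s@[v]) \<and> ?D (s@[v]) k}
     = {k. 0 < k \<and> k + 1 < length s \<and> ?D s k} \<union> {k. k = n \<and> ?D (s@[v]) n}"
  proof -
    have "?D (s@[v]) k = ?D s k" if "k + 1 < length s" for k
      using that by (simp add: nth_append less_imp_diff_less)
    note E = this
    show ?thesis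
    proof (rule set_eqI)
      fix k
      show "k \<in> {k. 0 < k \<and> k + 1 < length (s@[v]) \<and> ?D (s@[v]) k}
     \<longleftrightarrow> k \<in> {k. 0 < k \<and> k + 1 < length s \<and> ?D s k} \<union> {k. k = n \<and> ?D (s@[v]) n}"
      proof (cases "k < n")
        case True then show ?thesis using E[of k] assms by auto
      next
        case False
        show ?thesis
        proof (cases "k = n")
          case True then show ?thesis using assms by simp
        next
          case False then show ?thesis using \<open>\<not> k < n\<close> assms by auto
        qed
      qed
    qed
  qed
  have fin: "finite {k. 0 < k \<and> k + 1 < length s \<and> ?D s k}" by (rule finite_subset[of _ "{..<length s}"]) auto
  have "card ({k. 0 < k \<and> k + 1 < length s \<and> ?D s k} \<union> {k. k = n \<and> ?D (s@[v]) n})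
    = card {k. 0 < k \<and> k + 1 < length s \<and> ?D s k} + card {k. k = n \<and> ?D (s@[v]) n}"
    by (rule card_Un_disjoint) (use fin assms in auto)
  moreover have "card {k. k = n \<and> ?D (s@[v]) n} = (if dotp (vsub v (s ! n)) (vsub (s ! (n-1)) (s ! n)) = 0 then 1 else 0)"
    using assms by (simp add: nth_append less_imp_diff_less)
  ultimately show ?thesis unfolding turns_def A by simp
qed

definition Fw :: "nat \<Rightarrow> point list \<Rightarrow> complex" where
  "Fw n s = (- \<i>) ^ turns s * (\<Prod>k<n. of_int (u_thm (s ! k, s ! (k+1))))"

definition dirR :: "nat \<Rightarrow> point list \<Rightarrow> bool" where
  "dirR n s \<longleftrightarrow> fst (s ! n) - fst (s ! (n-1)) = 1"

lemma paths_step: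
  assumes "s \<in> paths y (int n)" "k < n"
  shows "vsub (s ! (k+1)) (s ! k) \<in> {(1,1), (-1,1)}"
  using assms unfolding paths_def checker_path_def by auto

lemma paths_last_dir:
  assumes "s \<in> paths y (int n)" "n \<ge> 1"
  shows "s ! (n-1) = (if dirR n s then (y - 1, int n - 1) else (y + 1, int n - 1))"
proof -
  have "vsub (s ! (n-1+1)) (s ! (n-1)) \<in> {(1,1), (-1,1)}" using paths_step[OF assms(1), of "n-1"] assms(2) by simp
  moreover have "s ! n = (y, int n)" using assms unfolding paths_def by auto
  ultimately show ?thesis using assms(2) unfolding dirR_def vsub_def by (auto simp: prod_eq_iff)
qed

lemma snoc_in_paths:
  assumes "s \<in> paths y (int n)" "n \<ge> 1" "d = 1 \<or> d = -1"
  shows "s @ [(y + d, int n + 1)] \<in> paths (y + d) (int (Suc n))"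
proof -
  have L: "length s = n + 1" and C: "checker_path s" and s0: "s ! 0 = (0,0)" and s1: "s ! 1 = (1,1)"
    and sn: "s ! n = (y, int n)"
    using assms unfolding paths_def by auto
  have "checker_path (s @ [(y + d, int n + 1)])"
    unfolding checker_path_def
  proof (intro conjI allI impI)
    fix k assume k: "k + 1 < length (s @ [(y + d, int n + 1)])"
    show "vsub ((s @ [(y + d, int n + 1)]) ! (k+1)) ((s @ [(y + d, int n + 1)]) ! k) \<in> {(1,1), (-1,1)}"
    proof (cases "k < n")
      case True then show ?thesis using C L unfolding checker_path_def by (simp add: nth_append)
    next
      case False then have "k = n" using k L by simp
      then show ?thesis using L sn assms(3) by (auto simp: nth_append vsub_def)
    qed
  qed simp
  then show ?thesis using L s0 s1 assms(2) unfolding paths_def by (auto simp: nth_append)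
qed

lemma paths_snoc_decomp:
  assumes "s \<in> paths x (int (Suc n))" "n \<ge> 1"
  shows "s = butlast s @ [(x, int n + 1)] \<and>
     butlast s \<in> paths (if dirR (Suc n) s then x - 1 else x + 1) (int n)"
proof -
  have L: "length s = n + 2" and C: "checker_path s" and s0: "s ! 0 = (0,0)" and s1: "s ! 1 = (1,1)"
    and sn: "s ! (Suc n) = (x, int n + 1)"
  proof -
    have nn: "nat (1 + int n) = Suc n" using nat_int[of "Suc n"] by (simp only: of_nat_Suc)
    show "length s = n + 2" "checker_path s" "s ! 0 = (0,0)" "s ! 1 = (1,1)" "s ! (Suc n) = (x, int n + 1)"
      using assms unfolding paths_def by (auto simp: nn add.commute)
  qed
  have ne: "s \<noteq> []" using L by auto
  have last: "last s = (x, int n + 1)" using sn L ne by (simp add: last_conv_nth)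
  have eq: "s = butlast s @ [(x, int n + 1)]" using append_butlast_last_id[OF ne] last by simp
  have Lb: "length (butlast s) = n + 1" using L by simp
  have nb: "\<And>k. k < n + 1 \<Longrightarrow> butlast s ! k = s ! k" using L by (simp add: nth_butlast)
  have Cb: "checker_path (butlast s)" unfolding checker_path_def
  proof (intro conjI allI impI)
    show "butlast s \<noteq> []"
    proof
      assume "butlast s = []"
      then have "length (butlast s) = 0" by (simp only: list.size)
      with Lb show False by linarith
    qed
    fix k assume k: "k + 1 < length (butlast s)"
    then show "vsub (butlast s ! (k + 1)) (butlast s ! k) \<in> {(1, 1), (- 1, 1)}"
      using C L Lb nb[of k] nb[of "k+1"] unfolding checker_path_def by auto
  qed
  have "s ! (Suc n - 1) = (if dirR (Suc n) s then (x - 1, int (Suc n) - 1) else (x + 1, int (Suc n) - 1))"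
    by (rule paths_last_dir[OF assms(1)]) simp
  then have "butlast s ! n = (if dirR (Suc n) s then x - 1 else x + 1, int n)" using nb[of n] by auto
  then show ?thesis using eq Lb Cb nb[of 0] nb[of 1] s0 s1 assms(2) unfolding paths_def by auto
qed

lemma Fw_snoc:
  assumes "s \<in> paths y (int n)" "n \<ge> 1" "d = 1 \<or> d = -1"
  shows "Fw (Suc n) (s @ [(y + d, int n + 1)]) = Fw n s *
     (if dirR n s \<longleftrightarrow> d = 1 then 1 else - \<i>) * of_int (u_thm ((y, int n), (y + d, int n + 1)))"
proof -
  have L: "length s = n + 1" and sn: "s ! n = (y, int n)" using assms unfolding paths_def by auto
  have T: "turns (s @ [(y + d, int n + 1)]) = turns s +
     (if dotp (vsub (y + d, int n + 1) (s ! n)) (vsub (s ! (n-1)) (s ! n)) = 0 then 1 else 0)"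
    by (rule turns_snoc[OF L assms(2)])
  have D: "(dotp (vsub (y + d, int n + 1) (s ! n)) (vsub (s ! (n-1)) (s ! n)) = 0) \<longleftrightarrow> \<not> (dirR n s \<longleftrightarrow> d = 1)"
    using paths_last_dir[OF assms(1,2)] sn assms(3) by (auto simp: dotp_def vsub_def)
  have P: "(\<Prod>k<Suc n. of_int (u_thm ((s @ [(y + d, int n + 1)]) ! k, (s @ [(y + d, int n + 1)]) ! (k+1))) :: complex)
     = (\<Prod>k<n. of_int (u_thm (s ! k, s ! (k+1)))) * of_int (u_thm ((y, int n), (y + d, int n + 1)))"
  proof -
    have "(\<Prod>k<n. of_int (u_thm ((s @ [(y + d, int n + 1)]) ! k, (s @ [(y + d, int n + 1)]) ! (k+1))) :: complex)
      = (\<Prod>k<n. of_int (u_thm (s ! k, s ! (k+1))))"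
      by (rule prod.cong) (use L in \<open>auto simp: nth_append\<close>)
    then show ?thesis using L sn by (simp add: nth_append)
  qed
  show ?thesis unfolding Fw_def T P using D by (auto simp: power_add)
qed

definition PR :: "int \<Rightarrow> nat \<Rightarrow> complex" where
  "PR x n = sum (Fw n) {s \<in> paths x (int n). dirR n s}"
definition PL :: "int \<Rightarrow> nat \<Rightarrow> complex" where
  "PL x n = sum (Fw n) {s \<in> paths x (int n). \<not> dirR n s}"

lemma set_snoc:
  assumes "n \<ge> 1" "d = 1 \<or> d = -1"
  shows "{s \<in> paths x (int (Suc n)). dirR (Suc n) s \<longleftrightarrow> d = 1} = (\<lambda>s. s @ [(x, int n + 1)]) ` paths (x-d) (int n)"
proof (intro set_eqI iffI)
  fix s assume "s \<in> {s \<in> paths x (int (Suc n)). dirR (Suc n) s \<longleftrightarrow> d = 1}"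
  then have s: "s \<in> paths x (int (Suc n))" "dirR (Suc n) s \<longleftrightarrow> d = 1" by auto
  have "s = butlast s @ [(x, int n + 1)] \<and> butlast s \<in> paths (if dirR (Suc n) s then x - 1 else x + 1) (int n)"
    by (rule paths_snoc_decomp[OF s(1) assms(1)])
  moreover have "(if dirR (Suc n) s then x - 1 else x + 1) = x - d" using s(2) assms(2) by auto
  ultimately have "s = butlast s @ [(x, int n + 1)]" "butlast s \<in> paths (x-d) (int n)" by simp_all
  then show "s \<in> (\<lambda>s. s @ [(x, int n + 1)]) ` paths (x-d) (int n)" by (rule image_eqI)
next
  fix s assume "s \<in> (\<lambda>s. s @ [(x, int n + 1)]) ` paths (x-d) (int n)"
  then obtain r where r: "r \<in> paths (x-d) (int n)" "s = r @ [(x, int n + 1)]" by auto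
  have "r @ [(x - d + d, int n + 1)] \<in> paths (x - d + d) (int (Suc n))"
    by (rule snoc_in_paths[OF r(1) assms])
  then have P: "s \<in> paths x (int (Suc n))" using r(2) by simp
  have L: "length r = n + 1" "r ! n = (x-d, int n)" using r(1) unfolding paths_def by auto
  have "s ! Suc n = (x, int n + 1)" "s ! (Suc n - 1) = (x - d, int n)" using L r(2) by (simp_all add: nth_append)
  then have "dirR (Suc n) s \<longleftrightarrow> x - (x - d) = 1" unfolding dirR_def by simp
  then have "dirR (Suc n) s \<longleftrightarrow> d = 1" by simp
  with P show "s \<in> {s \<in> paths x (int (Suc n)). dirR (Suc n) s \<longleftrightarrow> d = 1}" by auto
qed

lemma sum_snoc:
  assumes "n \<ge> 1" "d = 1 \<or> d = -1"
  shows "sum (Fw (Suc n)) {s \<in> paths x (int (Suc n)). dirR (Suc n) s \<longleftrightarrow> d = 1}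
    = of_int (u_thm ((x - d, int n), (x, int n + 1))) *
      ((if d = 1 then PR else PL) (x - d) n + (- \<i>) * (if d = 1 then PL else PR) (x - d) n)"
proof -
  let ?P = "paths (x-d) (int n)"
  let ?u = "of_int (u_thm ((x - d, int n), (x, int n + 1))) :: complex"
  have inj: "inj_on (\<lambda>s. s @ [(x, int n + 1)]) ?P" by (auto simp: inj_on_def)
  have "sum (Fw (Suc n)) {s \<in> paths x (int (Suc n)). dirR (Suc n) s \<longleftrightarrow> d = 1}
      = sum (\<lambda>s. Fw (Suc n) (s @ [(x, int n + 1)])) ?P"
    unfolding set_snoc[OF assms] by (simp add: sum.reindex[OF inj])
  also have "\<dots> = sum (\<lambda>s. ?u * (if dirR n s \<longleftrightarrow> d = 1 then Fw n s else (- \<i>) * Fw n s)) ?P"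
  proof (rule sum.cong[OF refl])
    fix s assume s: "s \<in> ?P"
    have "Fw (Suc n) (s @ [(x - d + d, int n + 1)]) = Fw n s *
     (if dirR n s \<longleftrightarrow> d = 1 then 1 else - \<i>) * of_int (u_thm ((x - d, int n), (x - d + d, int n + 1)))"
      by (rule Fw_snoc[OF s assms])
    moreover have "x - d + d = x" by simp
    ultimately have "Fw (Suc n) (s @ [(x, int n + 1)]) = Fw n s *
     (if dirR n s \<longleftrightarrow> d = 1 then 1 else - \<i>) * ?u" by simp
    then show "Fw (Suc n) (s @ [(x, int n + 1)]) = ?u * (if dirR n s \<longleftrightarrow> d = 1 then Fw n s else (- \<i>) * Fw n s)"
      by (cases "dirR n s"; cases "d = 1") (simp_all add: ac_simps)
  qed
  also have "\<dots> = ?u * sum (\<lambda>s. if dirR n s \<longleftrightarrow> d = 1 then Fw n s else (- \<i>) * Fw n s) ?P"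
    by (simp add: sum_distrib_left)
  also have "sum (\<lambda>s. if dirR n s \<longleftrightarrow> d = 1 then Fw n s else (- \<i>) * Fw n s) ?P
     = sum (Fw n) (?P \<inter> {s. dirR n s \<longleftrightarrow> d = 1}) + sum (\<lambda>s. (- \<i>) * Fw n s) (?P \<inter> - {s. dirR n s \<longleftrightarrow> d = 1})"
    by (rule sum.If_cases[OF finite_paths])
  also have "\<dots> = (if d = 1 then PR else PL) (x - d) n + (- \<i>) * (if d = 1 then PL else PR) (x - d) n"
  proof (cases "d = 1")
    case True
    have "?P \<inter> {s. dirR n s \<longleftrightarrow> d = 1} = {s \<in> ?P. dirR n s}" "?P \<inter> - {s. dirR n s \<longleftrightarrow> d = 1} = {s \<in> ?P. \<not> dirR n s}"
      using True by auto
    then show ?thesis using True unfolding PR_def PL_def by (simp add: sum_distrib_left)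
  next
    case False
    have "?P \<inter> {s. dirR n s \<longleftrightarrow> d = 1} = {s \<in> ?P. \<not> dirR n s}" "?P \<inter> - {s. dirR n s \<longleftrightarrow> d = 1} = {s \<in> ?P. dirR n s}"
      using False by auto
    then show ?thesis using False unfolding PR_def PL_def by (simp add: sum_distrib_left)
  qed
  finally show ?thesis .
qed

lemma PR_Suc:
  assumes "n \<ge> 1"
  shows "PR x (Suc n) = of_int (u_thm ((x - 1, int n), (x, int n + 1))) * (PR (x - 1) n + (- \<i>) * PL (x - 1) n)"
  using sum_snoc[OF assms, of 1 x] unfolding PR_def by simp

lemma PL_Suc:
  assumes "n \<ge> 1"
  shows "PL x (Suc n) = of_int (u_thm ((x + 1, int n), (x, int n + 1))) * (PL (x + 1) n + (- \<i>) * PR (x + 1) n)"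
  using sum_snoc[OF assms, of "-1" x] unfolding PL_def by simp

definition sg :: "int \<Rightarrow> int \<Rightarrow> int" where
  "sg a b = (if even a \<and> even b then -1 else 1)"

lemma u_sg: "u_thm ((a, b), (c, b + 1)) = sg (min a c) b"
proof -
  have "even ((min a c - 1) * (b - 1)) \<longleftrightarrow> \<not> (even (min a c) \<and> even b)" by auto
  then show ?thesis unfolding u_thm_def sg_def Let_def by simp
qed

fun pq :: "nat \<Rightarrow> int \<Rightarrow> int \<times> int" where
  "pq 0 x = (0, 0)"
| "pq (Suc 0) x = ((if x = 1 then -1 else 0), 0)"
| "pq (Suc (Suc n)) x = (sg (x - 1) (int (Suc n)) * (fst (pq (Suc n) (x - 1)) - snd (pq (Suc n) (x - 1))),
                        sg x (int (Suc n)) * (snd (pq (Suc n) (x + 1)) + fst (pq (Suc n) (x + 1))))"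

lemma paths1: "paths x 1 = (if x = 1 then {[(0,0),(1,1)]} else {})"
proof (intro set_eqI iffI)
  fix s assume s: "s \<in> paths x 1"
  then have L: "length s = 2" and s0: "s ! 0 = (0,0)" and s1: "s ! 1 = (1,1)" and sx: "s ! 1 = (x, 1)"
    unfolding paths_def by auto
  have "s = [(0,0),(1,1)]"
    by (rule nth_equalityI) (use L s0 s1 in \<open>auto simp: less_Suc_eq numeral_2_eq_2\<close>)
  moreover have "x = 1" using s1 sx by simp
  ultimately show "s \<in> (if x = 1 then {[(0,0),(1,1)]} else {})" by simp
next
  fix s assume "s \<in> (if x = 1 then {[(0,0),(1,1)] :: point list} else {})"
  then have "x = 1" "s = [(0,0),(1,1)]" by (auto split: if_splits)
  moreover have "checker_path [(0,0),(1,1)]" unfolding checker_path_def by (auto simp: vsub_def)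
  ultimately show "s \<in> paths x 1" unfolding paths_def by auto
qed

lemma turns2: "turns [a, b] = 0"
proof -
  have "{k. 0 < k \<and> k + 1 < length [a, b] \<and> dotp (vsub ([a, b] ! (k+1)) ([a, b] ! k)) (vsub ([a, b] ! (k-1)) ([a, b] ! k)) = 0} = {}"
    by auto
  then show ?thesis unfolding turns_def by (simp only: card.empty)
qed

lemma PR_PL_1: "PR x 1 = (if x = 1 then -1 else 0)" "PL x 1 = 0"
proof -
  have F: "Fw 1 [(0,0),(1,1)] = -1" unfolding Fw_def turns2 by (simp add: u_thm_def)
  have D: "dirR 1 [(0,0),(1,1)]" unfolding dirR_def by simp
  have S1: "{s \<in> paths x (int 1). dirR 1 s} = (if x = 1 then {[(0,0),(1,1)]} else {})"
    using paths1[of x] D by auto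
  have S2: "{s \<in> paths x (int 1). \<not> dirR 1 s} = {}"
    using paths1[of x] D by auto
  show "PR x 1 = (if x = 1 then -1 else 0)" unfolding PR_def S1 using F by simp
  show "PL x 1 = 0" unfolding PL_def S2 by simp
qed

lemma PR_PL_pq:
  assumes "n \<ge> 1"
  shows "PR x n = of_int (fst (pq n x)) \<and> PL x n = - \<i> * of_int (snd (pq n x))"
  using assms
proof (induction n arbitrary: x rule: nat_induct_at_least)
  case base then show ?case using PR_PL_1[of x] by simp
next
  case (Suc n)
  obtain m where m: "n = Suc m" using Suc.hyps by (cases n) auto
  have e1: "u_thm ((x - 1, int n), (x, int n + 1)) = sg (x - 1) (int n)"
    using u_sg[of "x - 1" "int n" x] by simp
  have e2: "u_thm ((x + 1, int n), (x, int n + 1)) = sg x (int n)"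
    using u_sg[of "x + 1" "int n" x] by simp
  have "PR x (Suc n) = of_int (sg (x - 1) (int n)) * (of_int (fst (pq n (x-1))) - of_int (snd (pq n (x-1))))"
    unfolding PR_Suc[OF Suc.hyps] e1 using Suc.IH[of "x-1"] by (simp add: algebra_simps)
  moreover have "PL x (Suc n) = - \<i> * (of_int (sg x (int n)) * (of_int (snd (pq n (x+1))) + of_int (fst (pq n (x+1)))))"
    unfolding PL_Suc[OF Suc.hyps] e2 using Suc.IH[of "x+1"] by (simp add: algebra_simps)
  ultimately show ?case unfolding m by simp
qed

definition pp :: "nat \<Rightarrow> int \<Rightarrow> int" where "pp n x = fst (pq n x)"
definition qq :: "nat \<Rightarrow> int \<Rightarrow> int" where "qq n x = snd (pq n x)"

lemma amp_pq:
  assumes "n \<ge> 1"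
  shows "a1 x (int n) u_thm = 2 powr ((1 - real n) / 2) * qq n x"
    and "a2 x (int n) u_thm = 2 powr ((1 - real n) / 2) * pp n x"
proof -
  let ?A = "paths x (int n)"
  have "sum (Fw n) ?A = sum (Fw n) {s \<in> ?A. dirR n s} + sum (Fw n) {s \<in> ?A. \<not> dirR n s}"
  proof -
    have "?A = {s \<in> ?A. dirR n s} \<union> {s \<in> ?A. \<not> dirR n s}" by auto
    then have "sum (Fw n) ?A = sum (Fw n) ({s \<in> ?A. dirR n s} \<union> {s \<in> ?A. \<not> dirR n s})" by simp
    also have "\<dots> = sum (Fw n) {s \<in> ?A. dirR n s} + sum (Fw n) {s \<in> ?A. \<not> dirR n s}"
      by (rule sum.union_disjoint) (use finite_paths in auto)
    finally show ?thesis .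
  qed
  then have "sum (Fw n) ?A = of_int (pp n x) - \<i> * of_int (qq n x)"
    using PR_PL_pq[OF assms, of x] unfolding PR_def PL_def pp_def qq_def by simp
  moreover have "amp x (int n) u_thm = complex_of_real (2 powr ((1 - real n) / 2)) * \<i> * sum (Fw n) ?A"
    unfolding amp_def Fw_def by simp
  moreover have "\<i> * (of_int (pp n x) - \<i> * of_int (qq n x)) = of_int (qq n x) + \<i> * (of_int (pp n x) :: complex)"
    by (simp add: right_diff_distrib mult.assoc[symmetric])
  ultimately have "amp x (int n) u_thm = complex_of_real (2 powr ((1 - real n) / 2)) * (of_int (qq n x) + \<i> * of_int (pp n x))"
    by (simp add: mult.assoc)
  then show "a1 x (int n) u_thm = 2 powr ((1 - real n) / 2) * qq n x"
    and "a2 x (int n) u_thm = 2 powr ((1 - real n) / 2) * pp n x"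
    unfolding a1_def a2_def by simp_all
qed

lemma amp_0: "a1 x 0 u = 0" "a2 x 0 u = 0"
  unfolding a1_def a2_def amp_def paths_def by simp_all

lemma pp_Suc: "n \<ge> 1 \<Longrightarrow> pp (Suc n) x = sg (x - 1) (int n) * (pp n (x - 1) - qq n (x - 1))"
  by (cases n) (auto simp: pp_def qq_def)

lemma qq_Suc: "n \<ge> 1 \<Longrightarrow> qq (Suc n) x = sg x (int n) * (qq n (x + 1) + pp n (x + 1))"
  by (cases n) (auto simp: pp_def qq_def)

lemma pp1: "pp 1 y = (if y = 1 then -1 else 0)" and qq1: "qq 1 y = 0"
  by (simp_all add: pp_def qq_def)

lemma invariant:
  assumes "k \<ge> 1"
  shows "x mod 4 = (2 * int k + 2) mod 4 \<Longrightarrow> pp (2*k) x = 0 \<and> qq (2*k) x = pp (2*k) (x+2) + qq (2*k) (x+2)"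
  using assms
proof (induction k arbitrary: x rule: nat_induct_at_least)
  case base
  have x4: "x mod 4 = 0" using base by simp
  then have "4 dvd x" by (simp add: dvd_eq_mod_eq_0)
  then have ev: "even x" by (rule dvd_trans[rotated]) simp
  have x0: "x + 2 \<noteq> 0" "x \<noteq> 2"
  proof -
    show "x + 2 \<noteq> 0" proof assume "x + 2 = 0" then have "x = -2" by simp with x4 show False by simp qed
    show "x \<noteq> 2" proof assume "x = 2" with x4 show False by simp qed
  qed
  have "pp 2 x = 0" using pp_Suc[of 1 x] pp1 qq1 x0 by (simp add: numeral_2_eq_2)
  moreover have "qq 2 x = pp 2 (x+2) + qq 2 (x+2)"
    using pp_Suc[of 1 "x+2"] qq_Suc[of 1 "x+2"] qq_Suc[of 1 x] pp1 qq1 x0 ev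
    by (simp add: numeral_2_eq_2 sg_def)
  ultimately show ?case by simp
next
  case (Suc k)
  let ?n = "2 * k"
  have n1: "?n \<ge> 1" "Suc ?n \<ge> 1" using Suc.hyps by auto
  have e: "2 * Suc k = Suc (Suc ?n)" by simp
  have "4 dvd x - (2 * int (Suc k) + 2)" using Suc.prems by (simp only: mod_eq_dvd_iff)
  then obtain j where j: "x - (2 * int (Suc k) + 2) = 4 * j" by (elim dvdE)
  then have xj: "x = 2 * int k + 4 * (j + 1)" by simp
  have m1: "(x-2) mod 4 = (2 * int k + 2) mod 4" unfolding mod_eq_dvd_iff xj
    by (rule dvdI[of _ _ j]) simp
  have m2: "(x+2) mod 4 = (2 * int k + 2) mod 4" unfolding mod_eq_dvd_iff xj
    by (rule dvdI[of _ _ "j + 1"]) simp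
  have IH1: "pp ?n (x-2) = 0 \<and> qq ?n (x-2) = pp ?n (x - 2 + 2) + qq ?n (x - 2 + 2)"
    using Suc.IH[OF m1] .
  then have IH1: "pp ?n (x-2) = 0 \<and> qq ?n (x-2) = pp ?n x + qq ?n x" by simp
  have IH2: "pp ?n (x+2) = 0 \<and> qq ?n (x+2) = pp ?n (x + 2 + 2) + qq ?n (x + 2 + 2)"
    using Suc.IH[OF m2] .
  then have IH2: "pp ?n (x+2) = 0 \<and> qq ?n (x+2) = pp ?n (x+4) + qq ?n (x+4)" by (simp add: add.assoc)
  have ex: "even x" unfolding xj by simp
  have par: "even x" "odd (x - 1)" "odd (x + 1)" "odd (x + 3)" "even (x - 2)" "even (x + 2)"
    using ex by simp_all
  have par2: "even (int ?n)" "odd (int (Suc ?n))" by simp_all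
  note par = par par2
  have ar: "x + 2 - 1 = x + 1" "x + 1 + 1 = x + 2" "x + 2 + 1 = x + 3" "x + 3 + 1 = x + 4"
    "x + 3 - 1 = x + 2" "x - 1 - 1 = x - 2" "x - 1 + 1 = x" "x + 1 - 1 = x" by simp_all
  have A1: "pp (Suc (Suc ?n)) x = pp (Suc ?n) (x - 1) - qq (Suc ?n) (x - 1)"
    using pp_Suc[OF n1(2), of x] par unfolding ar by (simp add: sg_def)
  have A2: "pp (Suc ?n) (x - 1) = - (pp ?n (x - 2) - qq ?n (x - 2))"
    using pp_Suc[OF n1(1), of "x - 1"] par unfolding ar by (simp add: sg_def)
  have A3: "qq (Suc ?n) (x - 1) = qq ?n x + pp ?n x"
    using qq_Suc[OF n1(1), of "x - 1"] par unfolding ar by (simp add: sg_def)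
  have B1: "qq (Suc (Suc ?n)) x = qq (Suc ?n) (x + 1) + pp (Suc ?n) (x + 1)"
    using qq_Suc[OF n1(2), of x] par unfolding ar by (simp add: sg_def)
  have B2: "qq (Suc ?n) (x + 1) = qq ?n (x + 2) + pp ?n (x + 2)"
    using qq_Suc[OF n1(1), of "x + 1"] par unfolding ar by (simp add: sg_def)
  have B3: "pp (Suc ?n) (x + 1) = - (pp ?n x - qq ?n x)"
    using pp_Suc[OF n1(1), of "x + 1"] par unfolding ar by (simp add: sg_def)
  have C1: "pp (Suc (Suc ?n)) (x + 2) = pp (Suc ?n) (x + 1) - qq (Suc ?n) (x + 1)"
    using pp_Suc[OF n1(2), of "x + 2"] par unfolding ar by (simp add: sg_def)
  have C2: "qq (Suc (Suc ?n)) (x + 2) = qq (Suc ?n) (x + 3) + pp (Suc ?n) (x + 3)"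
    using qq_Suc[OF n1(2), of "x + 2"] par unfolding ar by (simp add: sg_def)
  have C3: "qq (Suc ?n) (x + 3) = qq ?n (x + 4) + pp ?n (x + 4)"
    using qq_Suc[OF n1(1), of "x + 3"] par unfolding ar by (simp add: sg_def)
  have C4: "pp (Suc ?n) (x + 3) = - (pp ?n (x + 2) - qq ?n (x + 2))"
    using pp_Suc[OF n1(1), of "x + 3"] par unfolding ar by (simp add: sg_def)
  show ?case unfolding e using A1 A2 A3 B1 B2 B3 C1 C2 C3 C4 IH1 IH2 by simp
qed

lemma real_final:
  fixes C r :: real and Q0 P0 Q1m Q1p P1m P1p Q2 P2 :: int
  assumes "r * r = 2" "r > 0" "Q1p = Q0" "Q0 = Q1m" "Q2 = 2 * Q1m" "Q2 = 2 * P1p" "P1p = P1m - P2" "P0 = 0"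
  shows "r * (C * Q1p) = (C * r) * Q0 \<and> (C * r) * Q0 = r * (C * Q1m) \<and> r * (C * Q1m) = (C / r) * Q2
     \<and> (C / r) * Q2 = r * (C * P1p) \<and> r * (C * P1p) = r * (C * P1m) - 2 * ((C / r) * P2) \<and> (C * r) * P0 = 0"
proof -
  have h1: "(C / r) * (2 * x) = r * (C * x)" for x :: real
    using assms(1,2) by (simp add: field_simps)
  have h2: "2 * ((C / r) * x) = r * (C * x)" for x :: real
    using assms(1,2) by (simp add: field_simps)
  have q2: "real_of_int Q2 = 2 * real_of_int Q1m" "real_of_int Q2 = 2 * real_of_int P1p"
    using assms(5,6) by simp_all
  have p1: "real_of_int P1p = real_of_int P1m - real_of_int P2" using assms(7) by simp
  have e5: "r * (C * P1p) = r * (C * P1m) - 2 * ((C / r) * P2)"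
    unfolding p1 h2 by (simp add: algebra_simps)
  show ?thesis
    using assms(3,4,8) h1[of "real_of_int Q1m"] h1[of "real_of_int P1p"] q2 e5
    by (simp add: algebra_simps)
qed

theorem theorem4:
  fixes x t :: int
  assumes "t \<ge> 1"
    and "(x mod 4 = 2 \<and> t mod 4 = 1) \<or> (x mod 4 = 0 \<and> t mod 4 = 3)"
  shows "sqrt 2 * a1 (x+1) t u_thm = a1 x (t-1) u_thm
       \<and> a1 x (t-1) u_thm = sqrt 2 * a1 (x-1) t u_thm
       \<and> sqrt 2 * a1 (x-1) t u_thm = a1 x (t+1) u_thm
       \<and> a1 x (t+1) u_thm = sqrt 2 * a2 (x+1) t u_thm
       \<and> sqrt 2 * a2 (x+1) t u_thm = sqrt 2 * a2 (x-1) t u_thm - 2 * a2 x (t+1) u_thm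
       \<and> a2 x (t-1) u_thm = 0"
proof -
  obtain k :: nat where tk: "t = 2 * int k + 1" and xk: "x mod 4 = (2 * int k + 2) mod 4"
    and ex: "even x"
  proof (cases "x mod 4 = 2 \<and> t mod 4 = 1")
    case True
    then have "4 dvd x - 2" "4 dvd t - 1" by (simp_all only: mod_eq_dvd_iff[symmetric]) simp_all
    then obtain i j where i: "x - 2 = 4 * i" and j: "t - 1 = 4 * j" by (elim dvdE)
    have j0: "j \<ge> 0" using j assms(1) by simp
    show ?thesis
    proof (rule that[of "nat (2 * j)"])
      show "t = 2 * int (nat (2 * j)) + 1" using j j0 by simp
      show "x mod 4 = (2 * int (nat (2 * j)) + 2) mod 4" unfolding mod_eq_dvd_iff using i j0
        by (intro dvdI[of _ _ "i - j"]) (simp add: algebra_simps)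
      show "even x" using i by (metis add_diff_cancel_left' diff_add_cancel dvd_add dvd_triv_left even_numeral mult_2 numeral_Bit0 dvd_mult_left)
    qed
  next
    case False
    then have F: "x mod 4 = 0 \<and> t mod 4 = 3" using assms(2) by blast
    then have "4 dvd x - 0" "4 dvd t - 3" by (simp_all only: mod_eq_dvd_iff[symmetric]) simp_all
    then obtain i j where i: "x = 4 * i" and j: "t - 3 = 4 * j" by (auto elim!: dvdE)
    have j0: "j \<ge> 0" using j assms(1) by simp
    show ?thesis
    proof (rule that[of "nat (2 * j + 1)"])
      show "t = 2 * int (nat (2 * j + 1)) + 1" using j j0 by simp
      show "x mod 4 = (2 * int (nat (2 * j + 1)) + 2) mod 4" unfolding mod_eq_dvd_iff using i j0
        by (intro dvdI[of _ _ "i - j - 1"]) (simp add: algebra_simps)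
      show "even x" using i by simp
    qed
  qed
  define C :: real where "C = 2 powr ((1 - real (Suc (2 * k))) / 2)"
  define r :: real where "r = sqrt 2"
  have rr: "r * r = 2" "r > 0" unfolding r_def by simp_all
  have t1: "t = int (Suc (2 * k))" and t2: "t + 1 = int (Suc (Suc (2 * k)))" using tk by simp_all
  have c2: "2 powr ((1 - real (Suc (Suc (2 * k)))) / 2) = C / r"
  proof -
    have "(1 - real (Suc (Suc (2 * k)))) / 2 = (1 - real (Suc (2 * k))) / 2 - 1 / 2" by simp
    then show ?thesis unfolding C_def r_def by (simp only: powr_diff powr_half_sqrt[of 2])
  qed
  have aQ1p: "a1 (x+1) t u_thm = C * qq (Suc (2*k)) (x+1)" and aQ1m: "a1 (x-1) t u_thm = C * qq (Suc (2*k)) (x-1)"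
    and aP1p: "a2 (x+1) t u_thm = C * pp (Suc (2*k)) (x+1)" and aP1m: "a2 (x-1) t u_thm = C * pp (Suc (2*k)) (x-1)"
    unfolding t1 C_def by (rule amp_pq; simp)+
  have aQ2: "a1 x (t+1) u_thm = (C / r) * qq (Suc (Suc (2*k))) x" and aP2: "a2 x (t+1) u_thm = (C / r) * pp (Suc (Suc (2*k))) x"
    unfolding t2 c2[symmetric] by (rule amp_pq; simp)+
  define Q0 where "Q0 = (if k = 0 then 0 else qq (2 * k) x)"
  define P0 where "P0 = (if k = 0 then 0 else pp (2 * k) x)"
  have aQ0: "a1 x (t-1) u_thm = (C * r) * Q0 \<and> a2 x (t-1) u_thm = (C * r) * P0"
  proof (cases "k = 0")
    case True then show ?thesis using tk amp_0 unfolding Q0_def P0_def by simp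
  next
    case False
    have t0: "t - 1 = int (2 * k)" using tk by simp
    have "2 powr ((1 - real (2 * k)) / 2) = C * r"
    proof -
      have "(1 - real (2 * k)) / 2 = (1 - real (Suc (2 * k))) / 2 + 1 / 2" by simp
      then show ?thesis unfolding C_def r_def by (simp only: powr_add powr_half_sqrt[of 2])
    qed
    moreover have "2 * k \<ge> 1" using False by simp
    ultimately show ?thesis unfolding t0 Q0_def P0_def using False amp_pq[of "2 * k" x] by simp
  qed
  have par: "odd (x - 1)" "odd (x + 1)" "even (x - 2)" "odd (int (Suc (2 * k)))" "even (int (2 * k))"
    using ex by simp_all
  have ar: "x + 1 + 1 = x + 2" "x - 1 - 1 = x - 2" "x - 1 + 1 = x" "x + 1 - 1 = x" by simp_all
  have F: "qq (Suc (2*k)) (x+1) = Q0 \<and> Q0 = qq (Suc (2*k)) (x-1) \<and> qq (Suc (Suc (2*k))) x = 2 * qq (Suc (2*k)) (x-1)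
     \<and> qq (Suc (Suc (2*k))) x = 2 * pp (Suc (2*k)) (x+1) \<and> pp (Suc (2*k)) (x+1) = pp (Suc (2*k)) (x-1) - pp (Suc (Suc (2*k))) x
     \<and> P0 = 0"
  proof (cases "k = 0")
    case True
    have x2: "x mod 4 = 2" using xk True by simp
    have x0: "x \<noteq> 0" using x2 by auto
    have "pp 2 x = pp 1 (x - 1)" using pp_Suc[of 1 x] qq1 par True by (simp add: sg_def numeral_2_eq_2)
    moreover have "qq 2 x = 0" using qq_Suc[of 1 x] qq1 pp1 x0 by (simp add: numeral_2_eq_2)
    ultimately show ?thesis using True qq1 pp1 x0 unfolding Q0_def P0_def by (simp add: numeral_2_eq_2)
  next
    case False
    have n1: "2 * k \<ge> 1" "Suc (2 * k) \<ge> 1" using False by simp_all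
    have I: "pp (2*k) x = 0 \<and> qq (2*k) x = pp (2*k) (x+2) + qq (2*k) (x+2)"
      using invariant[of k x] False xk by simp
    have A1: "qq (Suc (2*k)) (x+1) = qq (2*k) (x+2) + pp (2*k) (x+2)"
      using qq_Suc[OF n1(1), of "x+1"] par unfolding ar by (simp add: sg_def)
    have A2: "qq (Suc (2*k)) (x-1) = qq (2*k) x + pp (2*k) x"
      using qq_Suc[OF n1(1), of "x-1"] par unfolding ar by (simp add: sg_def)
    have A3: "pp (Suc (2*k)) (x+1) = - (pp (2*k) x - qq (2*k) x)"
      using pp_Suc[OF n1(1), of "x+1"] par ex unfolding ar by (simp add: sg_def)
    have A4: "qq (Suc (Suc (2*k))) x = qq (Suc (2*k)) (x+1) + pp (Suc (2*k)) (x+1)"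
      using qq_Suc[OF n1(2), of x] par ex unfolding ar by (simp add: sg_def)
    have A5: "pp (Suc (Suc (2*k))) x = pp (Suc (2*k)) (x-1) - qq (Suc (2*k)) (x-1)"
      using pp_Suc[OF n1(2), of x] par unfolding ar by (simp add: sg_def)
    show ?thesis using I A1 A2 A3 A4 A5 False unfolding Q0_def P0_def by simp
  qed
  have R: "r * (C * qq (Suc (2*k)) (x+1)) = (C * r) * Q0 \<and> (C * r) * Q0 = r * (C * qq (Suc (2*k)) (x-1))
     \<and> r * (C * qq (Suc (2*k)) (x-1)) = (C / r) * qq (Suc (Suc (2*k))) x
     \<and> (C / r) * qq (Suc (Suc (2*k))) x = r * (C * pp (Suc (2*k)) (x+1))
     \<and> r * (C * pp (Suc (2*k)) (x+1)) = r * (C * pp (Suc (2*k)) (x-1)) - 2 * ((C / r) * pp (Suc (Suc (2*k))) x)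
     \<and> (C * r) * P0 = 0"
    by (rule real_final) (use rr F in auto)
  show ?thesis unfolding aQ1p aQ1m aP1p aP1m aQ2 aP2 aQ0[THEN conjunct1] aQ0[THEN conjunct2] r_def[symmetric]
    by (rule R)
qed

end
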